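(* The graphs $M_2$ and $M_3$ are not in $B_0$.
   Context: $M_2$ is the graph on vertices $a,b,c,d,e,f,g$ with edges $ab,ac,ad,be,cf,dg$. $M_3$ is the graph on vertices $a,b,c,d,e,f$ with edges $ab,ac,bc,ad,be,cf$. $B_0$ is the class of graphs having an EPG representation (a set of paths on a rectangular grid, one per vertex, two vertices adjacent iff their paths share a grid edge) in which no path has a bend, i.e. each path lies on a single grid line. *)

theory Defs
  imports Main
begin

text \<open>Edges of the (infinite) integer grid: \<open>HEdge x y\<close> joins (x,y) and (x+1,y);
  \<open>VEdge x y\<close> joins (x,y) and (x,y+1).\<close>
datatype grid_edge = HEdge int int | VEdge int int

definition straight_paths :: "grid_edge set set" where
  "straight_paths =
     {{HEdge x y | x. lo \<le> x \<and> x < hi} | y lo hi. lo < hi} \<union>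
     {{VEdge x y | y. lo \<le> y \<and> y < hi} | x lo hi. lo < hi}"

definition B0 :: "'a set \<Rightarrow> ('a \<Rightarrow> 'a \<Rightarrow> bool) \<Rightarrow> bool" where
  "B0 V adj \<longleftrightarrow> (\<exists>P :: 'a \<Rightarrow> grid_edge set.
      (\<forall>v\<in>V. P v \<in> straight_paths) \<and>
      (\<forall>u\<in>V. \<forall>v\<in>V. u \<noteq> v \<longrightarrow> (adj u v \<longleftrightarrow> P u \<inter> P v \<noteq> {})))"

text \<open>Vertices a,b,c,d,e,f,g are encoded as 0,1,2,3,4,5,6.\<close>
definition adj_of :: "(nat \<times> nat) set \<Rightarrow> nat \<Rightarrow> nat \<Rightarrow> bool" where
  "adj_of E u v \<longleftrightarrow> (u, v) \<in> E \<or> (v, u) \<in> E"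

definition M2_V :: "nat set" where "M2_V = {0,1,2,3,4,5,6}"
text \<open>ab, ac, ad, be, cf, dg\<close>
definition M2_E :: "(nat \<times> nat) set" where
  "M2_E = {(0,1),(0,2),(0,3),(1,4),(2,5),(3,6)}"

definition M3_V :: "nat set" where "M3_V = {0,1,2,3,4,5}"
text \<open>ab, ac, bc, ad, be, cf\<close>
definition M3_E :: "(nat \<times> nat) set" where
  "M3_E = {(0,1),(0,2),(1,2),(0,3),(1,4),(2,5)}"

end

theory Submission
  imports Defs
begin

definition seg :: "bool \<Rightarrow> int \<Rightarrow> int \<Rightarrow> int \<Rightarrow> grid_edge set" where
  "seg k c lo hi = (if k then {HEdge x c | x. lo \<le> x \<and> x < hi} else {VEdge c y | y. lo \<le> y \<and> y < hi})"

lemma straight_seg: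
  assumes "S \<in> straight_paths"
  shows "\<exists>t::bool\<times>int\<times>int\<times>int. S = seg (fst t) (fst (snd t)) (fst (snd (snd t))) (snd (snd (snd t)))
             \<and> fst (snd (snd t)) < snd (snd (snd t))"
proof -
  from assms consider (h) y lo hi where "lo < hi" "S = {HEdge x y | x. lo \<le> x \<and> x < hi}"
    | (v) x lo hi where "lo < hi" "S = {VEdge x y | y. lo \<le> y \<and> y < hi}"
    unfolding straight_paths_def by blast
  then show ?thesis
  proof cases
    case h then show ?thesis by (intro exI[of _ "(True, y, lo, hi)"]) (simp add: seg_def)
  next
    case v then show ?thesis by (intro exI[of _ "(False, x, lo, hi)"]) (simp add: seg_def)
  qed
qed

lemma seg_inter:
  assumes "lo < hi" "lo' < hi'"
  shows "(seg k c lo hi \<inter> seg k' c' lo' hi' \<noteq> {}) \<longleftrightarrow> (k = k' \<and> c = c' \<and> lo < hi' \<and> lo' < hi)"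
proof
  assume "seg k c lo hi \<inter> seg k' c' lo' hi' \<noteq> {}"
  then show "k = k' \<and> c = c' \<and> lo < hi' \<and> lo' < hi"
    unfolding seg_def by (auto split: if_splits)
next
  assume a: "k = k' \<and> c = c' \<and> lo < hi' \<and> lo' < hi"
  show "seg k c lo hi \<inter> seg k' c' lo' hi' \<noteq> {}"
  proof (cases k)
    case True
    then have "HEdge (max lo lo') c \<in> seg k c lo hi \<inter> seg k' c' lo' hi'"
      using a assms unfolding seg_def by auto
    then show ?thesis by blast
  next
    case False
    then have "VEdge c (max lo lo') \<in> seg k c lo hi \<inter> seg k' c' lo' hi'"
      using a assms unfolding seg_def by auto
    then show ?thesis by blast
  qed
qed

lemma B0_intervals:
  assumes "B0 V adj"
  shows "\<exists>k c lo hi. (\<forall>v\<in>V. lo v < (hi v :: int)) \<and> (\<forall>u\<in>V. \<forall>v\<in>V. u \<noteq> v \<longrightarrow>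
     (adj u v \<longleftrightarrow> (k u = (k v :: bool) \<and> c u = (c v :: int) \<and> lo u < hi v \<and> lo v < hi u)))"
proof -
  obtain P where P: "\<forall>v\<in>V. P v \<in> straight_paths"
    "\<forall>u\<in>V. \<forall>v\<in>V. u \<noteq> v \<longrightarrow> (adj u v \<longleftrightarrow> P u \<inter> P v \<noteq> {})"
    using assms unfolding B0_def by blast
  have "\<forall>v\<in>V. \<exists>t::bool\<times>int\<times>int\<times>int. P v = seg (fst t) (fst (snd t)) (fst (snd (snd t))) (snd (snd (snd t)))
             \<and> fst (snd (snd t)) < snd (snd (snd t))"
    using P(1) straight_seg by blast
  then obtain t where t: "\<forall>v\<in>V. P v = seg (fst (t v)) (fst (snd (t v))) (fst (snd (snd (t v)))) (snd (snd (snd (t v))))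
             \<and> fst (snd (snd (t v))) < snd (snd (snd (t v)))"
    by metis
  show ?thesis
    apply (rule exI[of _ "\<lambda>v. fst (t v)"], rule exI[of _ "\<lambda>v. fst (snd (t v))"],
           rule exI[of _ "\<lambda>v. fst (snd (snd (t v)))"], rule exI[of _ "\<lambda>v. snd (snd (snd (t v)))"])
    using t P(2) seg_inter by auto
qed

lemma M2_not: "\<not> B0 M2_V (adj_of M2_E)"
proof
  assume "B0 M2_V (adj_of M2_E)"
  from B0_intervals[OF this] obtain k c lo hi where
    A: "\<forall>u\<in>M2_V. \<forall>v\<in>M2_V. u \<noteq> v \<longrightarrow>
     (adj_of M2_E u v \<longleftrightarrow> (k u = (k v :: bool) \<and> c u = (c v :: int) \<and> lo u < hi v \<and> lo v < (hi u :: int)))"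
    by (elim exE conjE) (rule that, assumption+)
  have A': "adj_of M2_E u v \<longleftrightarrow> (k u = k v \<and> c u = c v \<and> lo u < hi v \<and> lo v < hi u)"
    if "u \<in> M2_V" "v \<in> M2_V" "u \<noteq> v" for u v
    by (rule A[rule_format, OF that])
  have E: "(u, v) \<in> M2_E \<Longrightarrow> adj_of M2_E u v" for u v by (simp add: adj_of_def)
  have N: "(u, v) \<notin> M2_E \<Longrightarrow> (v, u) \<notin> M2_E \<Longrightarrow> \<not> adj_of M2_E u v" for u v by (simp add: adj_of_def)
  have e1: "lo 0 < hi (1::nat) \<and> lo 1 < hi 0" using A'[of 0 1] E[of 0 1] by (simp add: M2_V_def M2_E_def)
  have e2: "lo 0 < hi (2::nat) \<and> lo 2 < hi 0" using A'[of 0 2] E[of 0 2] by (simp add: M2_V_def M2_E_def)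
  have e3: "lo 0 < hi (3::nat) \<and> lo 3 < hi 0" using A'[of 0 3] E[of 0 3] by (simp add: M2_V_def M2_E_def)
  have e5: "k 2 = k 0 \<and> c 2 = c 0 \<and> lo 2 < hi (5::nat) \<and> lo 5 < hi 2 \<and> k 5 = k 2 \<and> c 5 = c 2" using A'[of 0 2] A'[of 2 5] E[of 0 2] E[of 2 5] by (simp add: M2_V_def M2_E_def)
  have e6: "k 3 = k 0 \<and> c 3 = c 0 \<and> lo 3 < hi (6::nat) \<and> lo 6 < hi 3 \<and> k 6 = k 3 \<and> c 6 = c 3" using A'[of 0 3] A'[of 3 6] E[of 0 3] E[of 3 6] by (simp add: M2_V_def M2_E_def)
  have e4: "k 1 = k 0 \<and> c 1 = c 0 \<and> lo 1 < hi (4::nat) \<and> lo 4 < hi 1 \<and> k 4 = k 1 \<and> c 4 = c 1" using A'[of 0 1] A'[of 1 4] E[of 0 1] E[of 1 4] by (simp add: M2_V_def M2_E_def)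
  have n12: "\<not> (lo 1 < hi (2::nat) \<and> lo 2 < hi 1)" using A'[of 1 2] N[of 1 2] e4 e5 by (simp add: M2_V_def M2_E_def)
  have n13: "\<not> (lo 1 < hi (3::nat) \<and> lo 3 < hi 1)" using A'[of 1 3] N[of 1 3] e4 e6 by (simp add: M2_V_def M2_E_def)
  have n23: "\<not> (lo 2 < hi (3::nat) \<and> lo 3 < hi 2)" using A'[of 2 3] N[of 2 3] e5 e6 by (simp add: M2_V_def M2_E_def)
  have n04: "\<not> (lo 0 < hi (4::nat) \<and> lo 4 < hi 0)" using A'[of 0 4] N[of 0 4] e4 by (simp add: M2_V_def M2_E_def)
  have n05: "\<not> (lo 0 < hi (5::nat) \<and> lo 5 < hi 0)" using A'[of 0 5] N[of 0 5] e5 by (simp add: M2_V_def M2_E_def)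
  have n06: "\<not> (lo 0 < hi (6::nat) \<and> lo 6 < hi 0)" using A'[of 0 6] N[of 0 6] e6 by (simp add: M2_V_def M2_E_def)
  show False using e1 e2 e3 e4 e5 e6 n12 n13 n23 n04 n05 n06 by smt
qed

lemma M3_not: "\<not> B0 M3_V (adj_of M3_E)"
proof
  assume "B0 M3_V (adj_of M3_E)"
  from B0_intervals[OF this] obtain k c lo hi where I: "\<forall>v\<in>M3_V. lo v < (hi v :: int)" and
    A: "\<forall>u\<in>M3_V. \<forall>v\<in>M3_V. u \<noteq> v \<longrightarrow>
     (adj_of M3_E u v \<longleftrightarrow> (k u = (k v :: bool) \<and> c u = (c v :: int) \<and> lo u < hi v \<and> lo v < hi u))"
    by (elim exE conjE) (rule that, assumption+)
  have A': "adj_of M3_E u v \<longleftrightarrow> (k u = k v \<and> c u = c v \<and> lo u < hi v \<and> lo v < hi u)"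
    if "u \<in> M3_V" "v \<in> M3_V" "u \<noteq> v" for u v
    by (rule A[rule_format, OF that])
  have E: "(u, v) \<in> M3_E \<Longrightarrow> adj_of M3_E u v" for u v by (simp add: adj_of_def)
  have N: "(u, v) \<notin> M3_E \<Longrightarrow> (v, u) \<notin> M3_E \<Longrightarrow> \<not> adj_of M3_E u v" for u v by (simp add: adj_of_def)
  have e1: "k 1 = k 0 \<and> c 1 = c 0 \<and> lo 0 < hi (1::nat) \<and> lo 1 < hi 0" using A'[of 0 1] E[of 0 1] by (simp add: M3_V_def M3_E_def)
  have e2: "k 2 = k 0 \<and> c 2 = c 0 \<and> lo 0 < hi (2::nat) \<and> lo 2 < hi 0" using A'[of 0 2] E[of 0 2] by (simp add: M3_V_def M3_E_def)
  have e12: "lo 1 < hi (2::nat) \<and> lo 2 < hi 1" using A'[of 1 2] E[of 1 2] by (simp add: M3_V_def M3_E_def)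
  have e3: "k 3 = k 0 \<and> c 3 = c 0 \<and> lo 0 < hi (3::nat) \<and> lo 3 < hi 0" using A'[of 0 3] E[of 0 3] by (simp add: M3_V_def M3_E_def)
  have e4: "k 4 = k 1 \<and> c 4 = c 1 \<and> lo 1 < hi (4::nat) \<and> lo 4 < hi 1" using A'[of 1 4] E[of 1 4] by (simp add: M3_V_def M3_E_def)
  have e5: "k 5 = k 2 \<and> c 5 = c 2 \<and> lo 2 < hi (5::nat) \<and> lo 5 < hi 2" using A'[of 2 5] E[of 2 5] by (simp add: M3_V_def M3_E_def)
  have n34: "\<not> (lo 3 < hi (4::nat) \<and> lo 4 < hi 3)" using A'[of 3 4] N[of 3 4] e1 e3 e4 by (simp add: M3_V_def M3_E_def)
  have n35: "\<not> (lo 3 < hi (5::nat) \<and> lo 5 < hi 3)" using A'[of 3 5] N[of 3 5] e2 e3 e5 by (simp add: M3_V_def M3_E_def)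
  have n45: "\<not> (lo 4 < hi (5::nat) \<and> lo 5 < hi 4)" using A'[of 4 5] N[of 4 5] e1 e2 e4 e5 by (simp add: M3_V_def M3_E_def)
  have n04: "\<not> (lo 0 < hi (4::nat) \<and> lo 4 < hi 0)" using A'[of 0 4] N[of 0 4] e1 e4 by (simp add: M3_V_def M3_E_def)
  have n05: "\<not> (lo 0 < hi (5::nat) \<and> lo 5 < hi 0)" using A'[of 0 5] N[of 0 5] e2 e5 by (simp add: M3_V_def M3_E_def)
  have n13: "\<not> (lo 1 < hi (3::nat) \<and> lo 3 < hi 1)" using A'[of 1 3] N[of 1 3] e1 e3 by (simp add: M3_V_def M3_E_def)
  have n15: "\<not> (lo 1 < hi (5::nat) \<and> lo 5 < hi 1)" using A'[of 1 5] N[of 1 5] e1 e2 e5 by (simp add: M3_V_def M3_E_def)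
  have n23: "\<not> (lo 2 < hi (3::nat) \<and> lo 3 < hi 2)" using A'[of 2 3] N[of 2 3] e2 e3 by (simp add: M3_V_def M3_E_def)
  have n24: "\<not> (lo 2 < hi (4::nat) \<and> lo 4 < hi 2)" using A'[of 2 4] N[of 2 4] e1 e2 e4 by (simp add: M3_V_def M3_E_def)
  have i: "lo 3 < hi (3::nat)" "lo 4 < hi (4::nat)" "lo 5 < hi (5::nat)" using I by (simp_all add: M3_V_def)
  show False using e1 e2 e12 e3 e4 e5 n34 n35 n45 n04 n05 n13 n15 n23 n24 i by smt
qed

theorem lemma5p5:
  shows "\<not> B0 M2_V (adj_of M2_E) \<and> \<not> B0 M3_V (adj_of M3_E)"
  using M2_not M3_not by blast

end
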